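(* Let $X$ be a real separable Hilbert space, $A\in\mathcal L(X)$ monotone, $x^\dagger,\bar x\in X$, $y=Ax^\dagger$, and $d(R):=\min\{\|x^\dagger-\bar x-Aw\|:\|w\|\le R\}$. Suppose there are constants $K,q>0$ and $\underline R>1$ with $$d(R)\le\frac{K}{(\log R)^q}\quad\text{for all }R\ge\underline R.$$ Then the bias $B^A_{x^\dagger}(\alpha):=\alpha\|(A+\alpha I)^{-1}(x^\dagger-\bar x)\|$ satisfies $B^A_{x^\dagger}(\alpha)=\mathcal O\big((\log\frac1\alpha)^{-q}\big)$ as $\alpha\to0$. Moreover, if $\alpha(\delta)=c\,\delta^\zeta$ with constants $c>0$ and $0<\zeta<1$, then for all $y^\delta$ with $\|y-y^\delta\|\le\delta$, $$\|x^\delta_{\alpha(\delta)}-x^\dagger\|=\mathcal O\big((\log\tfrac1\delta)^{-q}\big)\quad\text{as }\delta\to0.$$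
   Context: $A$ monotone: $\langle Ax,x\rangle\ge0$ for all $x$. $x^\delta_\alpha:=(A+\alpha I)^{-1}(y^\delta+\alpha\bar x)$ is the Lavrentiev-regularized solution. $\mathcal L(X)$: bounded linear operators on $X$. *)

theory Defs
  imports "HOL-Analysis.Analysis" "HOL-Library.Landau_Symbols"
begin

definition monotone_op :: "('a::real_inner \<Rightarrow> 'a) \<Rightarrow> bool" where
  "monotone_op A \<longleftrightarrow> (\<forall>x. inner (A x) x \<ge> 0)"

definition resolvent :: "('a::real_normed_vector \<Rightarrow> 'a) \<Rightarrow> real \<Rightarrow> 'a \<Rightarrow> 'a" where
  "resolvent A \<alpha> = inv (\<lambda>x. A x + \<alpha> *\<^sub>R x)"

definition lavrentiev :: "('a::real_normed_vector \<Rightarrow> 'a) \<Rightarrow> real \<Rightarrow> 'a \<Rightarrow> 'a \<Rightarrow> 'a" where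
  "lavrentiev A \<alpha> yd xbar = resolvent A \<alpha> (yd + \<alpha> *\<^sub>R xbar)"

definition dist_fun :: "('a::real_normed_vector \<Rightarrow> 'a) \<Rightarrow> 'a \<Rightarrow> 'a \<Rightarrow> real \<Rightarrow> real" where
  "dist_fun A xdag xbar R = Inf {norm (xdag - xbar - A w) | w. norm w \<le> R}"

definition bias :: "('a::real_normed_vector \<Rightarrow> 'a) \<Rightarrow> 'a \<Rightarrow> 'a \<Rightarrow> real \<Rightarrow> real" where
  "bias A xdag xbar \<alpha> = \<alpha> * norm (resolvent A \<alpha> (xdag - xbar))"

end

theory Submission
  imports Defs "HOL-Real_Asymp.Real_Asymp"
begin


lemma coerc:
  fixes A :: "'a::real_inner \<Rightarrow> 'a"
  assumes mon: "monotone_op A"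
  shows "\<alpha> * (norm x)^2 \<le> inner (A x + \<alpha> *\<^sub>R x) x"
proof -
  have "inner (A x) x \<ge> 0" using mon unfolding monotone_op_def by blast
  moreover have "inner (A x + \<alpha> *\<^sub>R x) x = inner (A x) x + \<alpha> * (norm x)^2"
    by (simp add: inner_add_left power2_norm_eq_inner)
  ultimately show ?thesis by linarith
qed

lemma coerc_norm:
  fixes A :: "'a::real_inner \<Rightarrow> 'a"
  assumes mon: "monotone_op A" and a: "\<alpha> > 0"
  shows "\<alpha> * norm x \<le> norm (A x + \<alpha> *\<^sub>R x)"
proof (cases "x = 0")
  case True then show ?thesis by simp
next
  case False
  have "\<alpha> * (norm x)^2 \<le> inner (A x + \<alpha> *\<^sub>R x) x" by (rule coerc[OF mon])
  also have "\<dots> \<le> norm (A x + \<alpha> *\<^sub>R x) * norm x" by (rule norm_cauchy_schwarz)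
  finally have "(\<alpha> * norm x) * norm x \<le> norm (A x + \<alpha> *\<^sub>R x) * norm x"
    by (simp add: power2_eq_square mult.assoc)
  moreover have "norm x > 0" using False by simp
  ultimately show ?thesis by simp
qed

lemma g_surj:
  fixes A :: "'a::{real_inner, complete_space} \<Rightarrow> 'a"
  assumes lin: "bounded_linear A" and mon: "monotone_op A" and a: "\<alpha> > 0"
  shows "\<exists>x. A x + \<alpha> *\<^sub>R x = y"
proof -
  define g where "g = (\<lambda>x. A x + \<alpha> *\<^sub>R x)"
  obtain KA where KA: "KA > 0" "\<And>x. norm (A x) \<le> norm x * KA"
    using bounded_linear.pos_bounded[OF lin] by blast
  define M where "M = KA + \<alpha>"
  have M: "M > 0" "M \<ge> \<alpha>" using KA a unfolding M_def by auto
  have gM: "norm (g x) \<le> M * norm x" for x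
  proof -
    have "norm (g x) \<le> norm (A x) + norm (\<alpha> *\<^sub>R x)" unfolding g_def by (rule norm_triangle_ineq)
    also have "\<dots> \<le> norm x * KA + \<alpha> * norm x" using KA(2)[of x] a by simp
    finally show ?thesis unfolding M_def by (simp add: algebra_simps)
  qed
  have gdiff: "g u - g v = g (u - v)" for u v
    unfolding g_def using linear_diff[OF bounded_linear.linear[OF lin]] by (simp add: algebra_simps)
  define t where "t = \<alpha> / M^2"
  define c where "c = sqrt (1 - \<alpha>^2 / M^2)"
  have r: "\<alpha>^2 / M^2 > 0" "\<alpha>^2 / M^2 \<le> 1" using a M by (auto simp: power_mono)
  have c: "0 \<le> c" "c < 1" unfolding c_def using r real_sqrt_less_iff[of "1 - \<alpha>^2 / M^2" 1] by auto
  have contr: "norm (v - t *\<^sub>R g v) \<le> c * norm v" for v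
  proof -
    have i1: "\<alpha> * (norm v)^2 \<le> inner (g v) v" unfolding g_def by (rule coerc[OF mon])
    have n2: "(norm (g v))^2 \<le> M^2 * (norm v)^2"
      using gM[of v] by (metis norm_ge_zero power_mono power_mult_distrib)
    have t0: "t > 0" unfolding t_def using a M by simp
    have "(norm (v - t *\<^sub>R g v))^2 = (norm v)^2 - 2 * t * inner (g v) v + t^2 * (norm (g v))^2"
      unfolding power2_norm_eq_inner by (simp add: inner_diff_left inner_diff_right inner_commute algebra_simps power2_eq_square)
    also have "\<dots> \<le> (norm v)^2 - 2 * t * (\<alpha> * (norm v)^2) + t^2 * (M^2 * (norm v)^2)"
      using i1 n2 t0 by (smt (verit) mult_left_mono zero_le_power2 mult_pos_pos)
    also have "\<dots> = (1 - \<alpha>^2 / M^2) * (norm v)^2"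
      unfolding t_def using M by (simp add: field_simps power2_eq_square)
    also have "\<dots> = (c * norm v)^2" unfolding c_def using r by (simp add: power_mult_distrib)
    finally show ?thesis using c by (meson mult_nonneg_nonneg norm_ge_zero power2_le_imp_le)
  qed
  define T where "T = (\<lambda>x. x - t *\<^sub>R (g x - y))"
  have "\<forall>x z. dist (T x) (T z) \<le> c * dist x z"
  proof (intro allI)
    fix x z
    have "T x - T z = (x - z) - t *\<^sub>R g (x - z)"
      unfolding T_def gdiff[symmetric] by (simp add: algebra_simps)
    then show "dist (T x) (T z) \<le> c * dist x z" using contr[of "x - z"] by (simp add: dist_norm)
  qed
  then obtain x where "T x = x" using banach_fix_type[OF c] by blast
  then have "t *\<^sub>R (g x - y) = 0" unfolding T_def by simp
  moreover have "t \<noteq> 0" unfolding t_def using a M by simp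
  ultimately have "g x = y" by simp
  then show ?thesis unfolding g_def by blast
qed

lemma res_props:
  fixes A :: "'a::{real_inner, complete_space} \<Rightarrow> 'a"
  assumes lin: "bounded_linear A" and mon: "monotone_op A" and a: "\<alpha> > 0"
  shows res_right: "A (resolvent A \<alpha> y) + \<alpha> *\<^sub>R resolvent A \<alpha> y = y"
    and res_left: "resolvent A \<alpha> (A x + \<alpha> *\<^sub>R x) = x"
proof -
  define g where "g = (\<lambda>x. A x + \<alpha> *\<^sub>R x)"
  have inj: "inj g"
  proof (rule injI)
    fix u v assume "g u = g v"
    moreover have "g (u - v) = g u - g v" unfolding g_def
      by (simp add: linear_diff[OF bounded_linear.linear[OF lin]] scaleR_diff_right)
    ultimately have "g (u - v) = 0" by simp
    then have "\<alpha> * norm (u - v) \<le> 0" using coerc_norm[OF mon a, of "u - v"] unfolding g_def by simp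
    then show "u = v" using a by (simp add: mult_le_0_iff)
  qed
  have sur: "surj g" unfolding g_def using g_surj[OF lin mon a] by (metis surjI)
  show "A (resolvent A \<alpha> y) + \<alpha> *\<^sub>R resolvent A \<alpha> y = y"
    using surj_f_inv_f[OF sur] unfolding resolvent_def g_def by simp
  show "resolvent A \<alpha> (A x + \<alpha> *\<^sub>R x) = x"
    using inv_f_f[OF inj] unfolding resolvent_def g_def by simp
qed

lemma res_bound:
  fixes A :: "'a::{real_inner, complete_space} \<Rightarrow> 'a"
  assumes lin: "bounded_linear A" and mon: "monotone_op A" and a: "\<alpha> > 0"
  shows "\<alpha> * norm (resolvent A \<alpha> y) \<le> norm y"
  using coerc_norm[OF mon a, of "resolvent A \<alpha> y"] res_right[OF lin mon a, of y] by simp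

lemma res_add:
  fixes A :: "'a::{real_inner, complete_space} \<Rightarrow> 'a"
  assumes lin: "bounded_linear A" and mon: "monotone_op A" and a: "\<alpha> > 0"
  shows "resolvent A \<alpha> (u + v) = resolvent A \<alpha> u + resolvent A \<alpha> v"
proof -
  let ?r = "resolvent A \<alpha>"
  have "A (?r u + ?r v) + \<alpha> *\<^sub>R (?r u + ?r v) = (A (?r u) + \<alpha> *\<^sub>R ?r u) + (A (?r v) + \<alpha> *\<^sub>R ?r v)"
    using linear_add[OF bounded_linear.linear[OF lin]] by (simp add: algebra_simps)
  also have "\<dots> = u + v" using res_right[OF lin mon a] by simp
  finally show ?thesis using res_left[OF lin mon a, of "?r u + ?r v"] by simp
qed

lemma res_diff:
  fixes A :: "'a::{real_inner, complete_space} \<Rightarrow> 'a"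
  assumes lin: "bounded_linear A" and mon: "monotone_op A" and a: "\<alpha> > 0"
  shows "resolvent A \<alpha> (u - v) = resolvent A \<alpha> u - resolvent A \<alpha> v"
  using res_add[OF lin mon a, of "u - v" v] by (simp add: algebra_simps)

lemma res_A:
  fixes A :: "'a::{real_inner, complete_space} \<Rightarrow> 'a"
  assumes lin: "bounded_linear A" and mon: "monotone_op A" and a: "\<alpha> > 0"
  shows "norm (\<alpha> *\<^sub>R resolvent A \<alpha> (A w)) \<le> 2 * \<alpha> * norm w"
proof -
  have e: "A w = (A w + \<alpha> *\<^sub>R w) - \<alpha> *\<^sub>R w" by simp
  have rs: "resolvent A \<alpha> (\<alpha> *\<^sub>R w) = resolvent A \<alpha> (A w + \<alpha> *\<^sub>R w) - resolvent A \<alpha> (A w)"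
    using res_diff[OF lin mon a, of "A w + \<alpha> *\<^sub>R w" "A w"] by simp
  have "resolvent A \<alpha> (A w) = w - resolvent A \<alpha> (\<alpha> *\<^sub>R w)"
    using rs res_left[OF lin mon a] by simp
  then have "norm (\<alpha> *\<^sub>R resolvent A \<alpha> (A w)) = norm (\<alpha> *\<^sub>R w - \<alpha> *\<^sub>R resolvent A \<alpha> (\<alpha> *\<^sub>R w))"
    by (simp add: scaleR_diff_right)
  also have "\<dots> \<le> norm (\<alpha> *\<^sub>R w) + norm (\<alpha> *\<^sub>R resolvent A \<alpha> (\<alpha> *\<^sub>R w))" by (rule norm_triangle_ineq4)
  also have "\<dots> \<le> \<alpha> * norm w + \<alpha> * norm w"
    using res_bound[OF lin mon a, of "\<alpha> *\<^sub>R w"] a by simp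
  finally show ?thesis by simp
qed


lemma A2: fixes q z c :: real assumes "q > 0" "0 < z" "c > 0" shows "((\<lambda>\<delta>::real. c*\<delta> powr z) \<longlongrightarrow> 0) (at_right 0)"
  using assms by real_asymp

lemma A4: fixes q z c K :: real assumes "q > 0" "0 < z" "z < 1" "c > 0" "K > 0" shows "(\<lambda>\<delta>::real. \<delta> / (c*\<delta> powr z) + 3 * sqrt(c*\<delta> powr z) + K * 2 powr q * ln(1/(c*\<delta> powr z)) powr -q) \<in> O[at_right 0](\<lambda>\<delta>. ln(1/\<delta>) powr -q)"
proof -
  have 1: "(\<lambda>\<delta>::real. \<delta> / (c*\<delta> powr z)) \<in> O[at_right 0](\<lambda>\<delta>. ln(1/\<delta>) powr -q)"
    using assms by real_asymp
  have 2: "(\<lambda>\<delta>::real. 3 * sqrt(c*\<delta> powr z)) \<in> O[at_right 0](\<lambda>\<delta>. ln(1/\<delta>) powr -q)"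
    using assms by real_asymp
  have 3: "(\<lambda>\<delta>::real. ln(1/(c*\<delta> powr z)) powr -q) \<in> O[at_right 0](\<lambda>\<delta>. ln(1/\<delta>) powr -q)"
    using assms by real_asymp
  have 4: "(\<lambda>\<delta>::real. K * 2 powr q * ln(1/(c*\<delta> powr z)) powr -q) \<in> O[at_right 0](\<lambda>\<delta>. ln(1/\<delta>) powr -q)"
    using landau_o.big.cmult_in_iff[of "K * 2 powr q"] 3 assms(5) by simp
  show ?thesis using sum_in_bigo(1)[OF sum_in_bigo(1)[OF 1 2] 4] by simp
qed
lemma A5: fixes q :: real assumes "q > 0" shows "(\<lambda>a::real. sqrt a) \<in> o[at_right 0](\<lambda>a. ln (1/a) powr (-q))"
  using assms by real_asymp

lemma res_scale:
  fixes A :: "'a::{real_inner, complete_space} \<Rightarrow> 'a"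
  assumes lin: "bounded_linear A" and mon: "monotone_op A" and a: "\<alpha> > 0"
  shows "resolvent A \<alpha> (s *\<^sub>R u) = s *\<^sub>R resolvent A \<alpha> u"
proof -
  let ?r = "resolvent A \<alpha> u"
  have "A (s *\<^sub>R ?r) + \<alpha> *\<^sub>R (s *\<^sub>R ?r) = s *\<^sub>R (A ?r + \<alpha> *\<^sub>R ?r)"
    using linear_scale[OF bounded_linear.linear[OF lin]] by (simp add: algebra_simps)
  also have "\<dots> = s *\<^sub>R u" using res_right[OF lin mon a] by simp
  finally show ?thesis using res_left[OF lin mon a, of "s *\<^sub>R ?r"] by simp
qed

lemma err_bound:
  fixes A :: "'a::{real_inner, complete_space} \<Rightarrow> 'a"
  assumes lin: "bounded_linear A" and mon: "monotone_op A" and ap: "\<alpha> > 0"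
    and y_def: "y = A xdag" and yd: "norm (y - yd) \<le> \<delta>"
  shows "norm (lavrentiev A \<alpha> yd xbar - xdag) \<le> \<delta> / \<alpha> + bias A xdag xbar \<alpha>"
proof -
  let ?r = "resolvent A \<alpha>"
  have e: "yd + \<alpha> *\<^sub>R xbar = (yd - y) + ((A xdag + \<alpha> *\<^sub>R xdag) - \<alpha> *\<^sub>R (xdag - xbar))"
    unfolding y_def by (simp add: algebra_simps)
  have "lavrentiev A \<alpha> yd xbar = ?r (yd - y) + (?r (A xdag + \<alpha> *\<^sub>R xdag) - ?r (\<alpha> *\<^sub>R (xdag - xbar)))"
    unfolding lavrentiev_def e res_add[OF lin mon ap] res_diff[OF lin mon ap] ..
  also have "\<dots> = ?r (yd - y) + (xdag - \<alpha> *\<^sub>R ?r (xdag - xbar))"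
    unfolding res_left[OF lin mon ap] res_scale[OF lin mon ap] ..
  finally have "lavrentiev A \<alpha> yd xbar - xdag = ?r (yd - y) - \<alpha> *\<^sub>R ?r (xdag - xbar)"
    by simp
  then have "norm (lavrentiev A \<alpha> yd xbar - xdag) \<le> norm (?r (yd - y)) + norm (\<alpha> *\<^sub>R ?r (xdag - xbar))"
    using norm_triangle_ineq4[of "?r (yd - y)" "\<alpha> *\<^sub>R ?r (xdag - xbar)"] by simp
  also have "norm (?r (yd - y)) \<le> \<delta> / \<alpha>"
  proof -
    have "\<alpha> * norm (?r (yd - y)) \<le> norm (yd - y)" by (rule res_bound[OF lin mon ap])
    also have "\<dots> \<le> \<delta>" using yd by (simp add: norm_minus_commute)
    finally show ?thesis using ap by (simp add: field_simps)
  qed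
  also have "norm (\<alpha> *\<^sub>R ?r (xdag - xbar)) = bias A xdag xbar \<alpha>"
    unfolding bias_def using ap by simp
  finally show ?thesis by simp
qed

lemma bias_bound:
  fixes A :: "'a::{real_inner, complete_space} \<Rightarrow> 'a"
  assumes lin: "bounded_linear A" and mon: "monotone_op A"
    and K: "K > 0" and q: "q > 0" and Rlow: "Rlow > 1"
    and dR: "\<And>R. R \<ge> Rlow \<Longrightarrow> dist_fun A xdag xbar R \<le> K / (ln R) powr q"
    and a: "0 < \<alpha>" "\<alpha> < 1" "\<alpha> \<le> 1 / Rlow^2"
  shows "bias A xdag xbar \<alpha> \<le> 3 * sqrt \<alpha> + K * 2 powr q * ln (1 / \<alpha>) powr (- q)"
proof -
  define R where "R = 1 / sqrt \<alpha>"
  have sa: "sqrt \<alpha> > 0" using a by simp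
  have "sqrt \<alpha> \<le> sqrt (1 / Rlow^2)" using a(3) by simp
  also have "\<dots> = 1 / Rlow" using Rlow by (simp add: real_sqrt_divide)
  finally have "sqrt \<alpha> \<le> 1 / Rlow" .
  then have RR: "R \<ge> Rlow" unfolding R_def using sa Rlow by (simp add: field_simps)
  have lnR: "ln R = ln (1 / \<alpha>) / 2" unfolding R_def using a
    by (simp add: ln_div ln_sqrt)
  have l0: "ln (1 / \<alpha>) > 0" using a by simp
  have "K / (ln R) powr q = K / ((ln (1 / \<alpha>)) powr q / 2 powr q)"
    unfolding lnR using l0 by (simp add: powr_divide)
  also have "\<dots> = K * 2 powr q * ln (1 / \<alpha>) powr (- q)"
    using l0 by (simp add: powr_minus field_simps)
  finally have dK: "dist_fun A xdag xbar R \<le> K * 2 powr q * ln (1 / \<alpha>) powr (- q)"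
    using dR[OF RR] by simp
  define S where "S = {norm (xdag - xbar - A w) | w. norm w \<le> R}"
  have "norm (xdag - xbar - A 0) \<in> S" unfolding S_def using RR Rlow by auto
  then have Sne: "S \<noteq> {}" by blast
  have "Inf S < dist_fun A xdag xbar R + sqrt \<alpha>" unfolding dist_fun_def S_def using sa by simp
  then obtain s where "s \<in> S" "s < dist_fun A xdag xbar R + sqrt \<alpha>" using cInf_lessD[OF Sne] by blast
  then obtain w where w: "norm w \<le> R" "norm (xdag - xbar - A w) < dist_fun A xdag xbar R + sqrt \<alpha>"
    unfolding S_def by blast
  define r where "r = xdag - xbar - A w"
  have "xdag - xbar = A w + r" unfolding r_def by simp
  then have "bias A xdag xbar \<alpha> = \<alpha> * norm (resolvent A \<alpha> (A w) + resolvent A \<alpha> r)"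
    unfolding bias_def using res_add[OF lin mon a(1)] by simp
  also have "\<dots> = norm (\<alpha> *\<^sub>R (resolvent A \<alpha> (A w) + resolvent A \<alpha> r))" using a by simp
  also have "\<dots> = norm (\<alpha> *\<^sub>R resolvent A \<alpha> (A w) + \<alpha> *\<^sub>R resolvent A \<alpha> r)"
    by (simp only: scaleR_add_right)
  also have "\<dots> \<le> norm (\<alpha> *\<^sub>R resolvent A \<alpha> (A w)) + norm (\<alpha> *\<^sub>R resolvent A \<alpha> r)"
    by (rule norm_triangle_ineq)
  also have "\<dots> \<le> 2 * \<alpha> * norm w + norm r"
  proof -
    have h1: "norm (resolvent A \<alpha> (A w)) \<le> 2 * norm w" using res_A[OF lin mon a(1), of w] a by simp
    have "\<alpha> * norm (resolvent A \<alpha> (A w)) \<le> \<alpha> * (2 * norm w)"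
      by (rule mult_left_mono[OF h1]) (use a in simp)
    then have h2: "\<alpha> * norm (resolvent A \<alpha> (A w)) \<le> 2 * \<alpha> * norm w" by (simp add: mult.assoc mult.left_commute)
    have h3: "\<alpha> * norm (resolvent A \<alpha> r) \<le> norm r" by (rule res_bound[OF lin mon a(1)])
    have e1: "norm (\<alpha> *\<^sub>R resolvent A \<alpha> (A w)) = \<alpha> * norm (resolvent A \<alpha> (A w))" using a by simp
    have e2: "norm (\<alpha> *\<^sub>R resolvent A \<alpha> r) = \<alpha> * norm (resolvent A \<alpha> r)" using a by simp
    show ?thesis unfolding e1 e2 using h2 h3 by linarith
  qed
  also have "\<dots> \<le> 2 * \<alpha> * R + norm r" using w(1) a by simp
  also have "2 * \<alpha> * R = 2 * sqrt \<alpha>"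
  proof -
    have "2 * \<alpha> * R = 2 * (\<alpha> / sqrt \<alpha>)" unfolding R_def by simp
    also have "\<dots> = 2 * sqrt \<alpha>" using a by (simp add: real_div_sqrt)
    finally show ?thesis .
  qed
  finally show ?thesis using w(2) dK unfolding r_def by linarith
qed

theorem mainTheorem13:
  fixes A :: "'a::{real_inner, complete_space} \<Rightarrow> 'a"
    and xdag xbar y :: 'a
    and K q Rlow c \<zeta> :: real
  assumes sep: "separable_space (euclidean :: 'a topology)"
    and lin: "bounded_linear A"
    and mon: "monotone_op A"
    and y_def: "y = A xdag"
    and K: "K > 0" and q: "q > 0" and Rlow: "Rlow > 1"
    and dR: "\<And>R. R \<ge> Rlow \<Longrightarrow> dist_fun A xdag xbar R \<le> K / (ln R) powr q"
  shows "bias A xdag xbar \<in> O[at_right 0](\<lambda>\<alpha>. (ln (1 / \<alpha>)) powr (- q)) \<and>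
         (c > 0 \<longrightarrow> 0 < \<zeta> \<longrightarrow> \<zeta> < 1 \<longrightarrow>
         (\<exists>C. \<forall>\<^sub>F \<delta> in at_right 0. \<forall>yd. norm (y - yd) \<le> \<delta> \<longrightarrow>
              norm (lavrentiev A (c * \<delta> powr \<zeta>) yd xbar - xdag)
                \<le> C * (ln (1 / \<delta>)) powr (- q)))"
proof
  define a0 where "a0 = min (1/2) (1 / Rlow^2)"
  have a0: "a0 > 0" unfolding a0_def using Rlow by simp
  have BB: "bias A xdag xbar \<alpha> \<le> 3 * sqrt \<alpha> + K * 2 powr q * ln (1 / \<alpha>) powr (- q)"
    if "0 < \<alpha>" "\<alpha> < a0" for \<alpha>
    using bias_bound[OF lin mon K q Rlow dR] that unfolding a0_def by simp
  have ev1: "\<forall>\<^sub>F \<alpha> in at_right 0. 0 < \<alpha> \<and> \<alpha> < a0"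
    using a0 eventually_at_right_field by (metis (mono_tags, lifting) eventually_at_right_field)
  have ev2: "\<forall>\<^sub>F \<alpha> in at_right 0. norm (sqrt \<alpha>) \<le> 1 * norm (ln (1 / \<alpha>) powr (- q))"
    using landau_o.smallD[OF A5[OF q], of 1] by simp
  have "\<forall>\<^sub>F \<alpha> in at_right 0. norm (bias A xdag xbar \<alpha>) \<le> (3 + K * 2 powr q) * norm (ln (1 / \<alpha>) powr (- q))"
    using ev1 ev2
  proof eventually_elim
    case (elim \<alpha>)
    have b0: "bias A xdag xbar \<alpha> \<ge> 0" unfolding bias_def using elim by simp
    have "ln (1 / \<alpha>) powr (- q) \<ge> 0" by simp
    then show ?case using BB[of \<alpha>] elim b0 by (simp add: algebra_simps)
  qed
  then show "bias A xdag xbar \<in> O[at_right 0](\<lambda>\<alpha>. (ln (1 / \<alpha>)) powr (- q))" by (rule bigoI)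
  show "c > 0 \<longrightarrow> 0 < \<zeta> \<longrightarrow> \<zeta> < 1 \<longrightarrow>
         (\<exists>C. \<forall>\<^sub>F \<delta> in at_right 0. \<forall>yd. norm (y - yd) \<le> \<delta> \<longrightarrow>
              norm (lavrentiev A (c * \<delta> powr \<zeta>) yd xbar - xdag)
                \<le> C * (ln (1 / \<delta>)) powr (- q))"
  proof (intro impI)
    assume c: "c > 0" and z: "0 < \<zeta>" "\<zeta> < 1"
    obtain C where C: "C > 0" and evC: "\<forall>\<^sub>F \<delta> in at_right 0.
        norm (\<delta> / (c*\<delta> powr \<zeta>) + 3 * sqrt(c*\<delta> powr \<zeta>) + K * 2 powr q * ln(1/(c*\<delta> powr \<zeta>)) powr -q)
          \<le> C * norm (ln (1 / \<delta>) powr (- q))"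
      using landau_o.bigE[OF A4[OF q z c K]] by blast
    have lim: "((\<lambda>\<delta>::real. c*\<delta> powr \<zeta>) \<longlongrightarrow> 0) (at_right 0)" using A2[OF q z(1) c] .
    have ev3: "\<forall>\<^sub>F \<delta> in at_right 0. c*\<delta> powr \<zeta> < a0" using order_tendstoD(2)[OF lim a0] .
    have ev4: "\<forall>\<^sub>F \<delta> in at_right (0::real). 0 < \<delta>" by (simp add: eventually_at_right_less)
    show "\<exists>C. \<forall>\<^sub>F \<delta> in at_right 0. \<forall>yd. norm (y - yd) \<le> \<delta> \<longrightarrow>
              norm (lavrentiev A (c * \<delta> powr \<zeta>) yd xbar - xdag)
                \<le> C * (ln (1 / \<delta>)) powr (- q)"
    proof (intro exI allI impI)
      show "\<forall>\<^sub>F \<delta> in at_right 0. \<forall>yd. norm (y - yd) \<le> \<delta> \<longrightarrow>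
              norm (lavrentiev A (c * \<delta> powr \<zeta>) yd xbar - xdag)
                \<le> C * (ln (1 / \<delta>)) powr (- q)"
        using evC ev3 ev4
      proof eventually_elim
        case (elim \<delta>)
        define \<alpha> where "\<alpha> = c * \<delta> powr \<zeta>"
        have ap: "\<alpha> > 0" unfolding \<alpha>_def using c elim by simp
        have aa: "\<alpha> < a0" using elim unfolding \<alpha>_def by simp
        show ?case
        proof (intro allI impI)
          fix yd assume yd: "norm (y - yd) \<le> \<delta>"
          have E1: "norm (lavrentiev A \<alpha> yd xbar - xdag) \<le> \<delta> / \<alpha> + bias A xdag xbar \<alpha>"
            by (rule err_bound[OF lin mon ap y_def yd])
          have E2: "bias A xdag xbar \<alpha> \<le> 3 * sqrt \<alpha> + K * 2 powr q * ln (1 / \<alpha>) powr (- q)" using BB ap aa by simp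
          have "norm (lavrentiev A \<alpha> yd xbar - xdag) \<le>
               \<delta> / \<alpha> + 3 * sqrt \<alpha> + K * 2 powr q * ln (1 / \<alpha>) powr (- q)" using E1 E2 by linarith
          also have "\<dots> \<le> norm (\<delta> / (c*\<delta> powr \<zeta>) + 3 * sqrt(c*\<delta> powr \<zeta>) + K * 2 powr q * ln(1/(c*\<delta> powr \<zeta>)) powr -q)"
            unfolding \<alpha>_def real_norm_def by (rule abs_ge_self)
          also have "\<dots> \<le> C * norm (ln (1 / \<delta>) powr (- q))" using elim by simp
          also have "\<dots> = C * ln (1 / \<delta>) powr (- q)" by simp
          finally show "norm (lavrentiev A (c * \<delta> powr \<zeta>) yd xbar - xdag) \<le> C * ln (1 / \<delta>) powr (- q)"
            unfolding \<alpha>_def .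
        qed
      qed
    qed
  qed
qed

end
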